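(* Let $\Omega\subset\mathbb{R}^n$ be Lebesgue measurable with finite measure, let $f$ satisfy Assumption A, let $L>L_f$, and let $g=\delta_{\mathbb{Z}}$. Let $u_0\in L^2(\Omega)$ and let $(u_k)$ be a sequence such that for every $k\ge0$, $u_{k+1}$ is a global minimizer over $u\in L^2(\Omega)$ of \[ f(u_k)+\int_\Omega\nabla f(u_k)(u-u_k)\,dx+\frac L2\|u-u_k\|_{L^2(\Omega)}^2+\int_\Omega\delta_{\mathbb{Z}}(u(x))\,dx . \] If $u^*\in L^2(\Omega)$ is a weak sequential limit point of $(u_k)$, then the whole sequence satisfies $u_k\to u^*$ in $L^1(\Omega)$.
   Context: Assumption A: $f:L^2(\Omega)\to\mathbb{R}$ is bounded from below, weakly lower semicontinuous, Fréchet differentiable, and $\nabla f:L^2(\Omega)\to L^2(\Omega)$ is Lipschitz continuous with constant $L_f$. $\delta_{\mathbb{Z}}(u)=0$ if $u\in\mathbb{Z}$ and $\delta_{\mathbb{Z}}(u)=+\infty$ otherwise. *)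

theory Defs
  imports "HOL-Analysis.Analysis"
begin

text \<open>Elements of L^2(Omega) are represented by real-valued functions on
  real^'n that are Lebesgue measurable on Omega and square integrable on Omega;
  all notions below are taken w.r.t. the measure lebesgue_on Omega.\<close>

definition L2 :: "(real^'n) set \<Rightarrow> (real^'n \<Rightarrow> real) set" where
  "L2 \<Omega> = {u. u \<in> borel_measurable (lebesgue_on \<Omega>) \<and>
                 integrable (lebesgue_on \<Omega>) (\<lambda>x. (u x)\<^sup>2)}"

definition L2_inner :: "(real^'n) set \<Rightarrow> (real^'n \<Rightarrow> real) \<Rightarrow> (real^'n \<Rightarrow> real) \<Rightarrow> real" where
  "L2_inner \<Omega> u v = integral\<^sup>L (lebesgue_on \<Omega>) (\<lambda>x. u x * v x)"

definition L2_norm :: "(real^'n) set \<Rightarrow> (real^'n \<Rightarrow> real) \<Rightarrow> real" where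
  "L2_norm \<Omega> u = sqrt (integral\<^sup>L (lebesgue_on \<Omega>) (\<lambda>x. (u x)\<^sup>2))"

definition ae_eq :: "(real^'n) set \<Rightarrow> (real^'n \<Rightarrow> real) \<Rightarrow> (real^'n \<Rightarrow> real) \<Rightarrow> bool" where
  "ae_eq \<Omega> u v \<longleftrightarrow> (AE x in lebesgue_on \<Omega>. u x = v x)"

definition L2_weak_conv :: "(real^'n) set \<Rightarrow> (nat \<Rightarrow> real^'n \<Rightarrow> real) \<Rightarrow> (real^'n \<Rightarrow> real) \<Rightarrow> bool" where
  "L2_weak_conv \<Omega> w u \<longleftrightarrow> (\<forall>k. w k \<in> L2 \<Omega>) \<and> u \<in> L2 \<Omega> \<and>
     (\<forall>v\<in>L2 \<Omega>. (\<lambda>k. L2_inner \<Omega> (w k) v) \<longlonglongrightarrow> L2_inner \<Omega> u v)"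

text \<open>Assumption A on f with gradient G and Lipschitz constant Lf.
  f and G are required to be well defined on equivalence classes.\<close>
definition assumptionA ::
  "(real^'n) set \<Rightarrow> ((real^'n \<Rightarrow> real) \<Rightarrow> real) \<Rightarrow> ((real^'n \<Rightarrow> real) \<Rightarrow> (real^'n \<Rightarrow> real)) \<Rightarrow> real \<Rightarrow> bool" where
  "assumptionA \<Omega> f G Lf \<longleftrightarrow>
     \<comment> \<open>f and G are well-defined on L^2 (independent of representative)\<close>
     (\<forall>u\<in>L2 \<Omega>. \<forall>v\<in>L2 \<Omega>. ae_eq \<Omega> u v \<longrightarrow> f u = f v \<and> ae_eq \<Omega> (G u) (G v)) \<and>
     \<comment> \<open>bounded from below\<close>
     (\<exists>c. \<forall>u\<in>L2 \<Omega>. c \<le> f u) \<and>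
     \<comment> \<open>weakly (sequentially) lower semicontinuous\<close>
     (\<forall>w u. L2_weak_conv \<Omega> w u \<longrightarrow> ereal (f u) \<le> liminf (\<lambda>k. ereal (f (w k)))) \<and>
     \<comment> \<open>Frechet differentiable with gradient G u in L^2\<close>
     (\<forall>u\<in>L2 \<Omega>. G u \<in> L2 \<Omega> \<and>
        (\<forall>\<epsilon>>0. \<exists>\<delta>>0. \<forall>h\<in>L2 \<Omega>. L2_norm \<Omega> h < \<delta> \<longrightarrow>
           \<bar>f (\<lambda>x. u x + h x) - f u - L2_inner \<Omega> (G u) h\<bar> \<le> \<epsilon> * L2_norm \<Omega> h)) \<and>
     \<comment> \<open>gradient Lipschitz with constant Lf\<close>
     0 \<le> Lf \<and>
     (\<forall>u\<in>L2 \<Omega>. \<forall>v\<in>L2 \<Omega>.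
        L2_norm \<Omega> (\<lambda>x. G u x - G v x) \<le> Lf * L2_norm \<Omega> (\<lambda>x. u x - v x))"

definition int_delta_Z :: "(real^'n) set \<Rightarrow> (real^'n \<Rightarrow> real) \<Rightarrow> ennreal" where
  "int_delta_Z \<Omega> u = (\<integral>\<^sup>+ x. (if u x \<in> \<int> then 0 else \<infinity>) \<partial>(lebesgue_on \<Omega>))"

definition model_obj ::
  "(real^'n) set \<Rightarrow> ((real^'n \<Rightarrow> real) \<Rightarrow> real) \<Rightarrow> ((real^'n \<Rightarrow> real) \<Rightarrow> (real^'n \<Rightarrow> real))
     \<Rightarrow> real \<Rightarrow> (real^'n \<Rightarrow> real) \<Rightarrow> (real^'n \<Rightarrow> real) \<Rightarrow> ereal" where
  "model_obj \<Omega> f G L uk u =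
     ereal (f uk + L2_inner \<Omega> (G uk) (\<lambda>x. u x - uk x)
            + L / 2 * (L2_norm \<Omega> (\<lambda>x. u x - uk x))\<^sup>2)
     + enn2ereal (int_delta_Z \<Omega> u)"

end

theory Submission
  imports Defs
begin


lemma abs_mult_le_sq: "\<bar>(a::real) * b\<bar> \<le> a\<^sup>2 + b\<^sup>2"
proof -
  have "0 \<le> (\<bar>a\<bar> - \<bar>b\<bar>)\<^sup>2" by simp
  hence "2 * (\<bar>a\<bar> * \<bar>b\<bar>) \<le> a\<^sup>2 + b\<^sup>2" by (simp add: power2_diff)
  moreover have "0 \<le> \<bar>a\<bar> * \<bar>b\<bar>" by simp
  ultimately have "\<bar>a\<bar> * \<bar>b\<bar> \<le> a\<^sup>2 + b\<^sup>2" by linarith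
  thus ?thesis by (simp add: abs_mult)
qed

lemma L2_meas: "u \<in> L2 \<Omega> \<Longrightarrow> u \<in> borel_measurable (lebesgue_on \<Omega>)"
  by (simp add: L2_def)

lemma L2_sq: "u \<in> L2 \<Omega> \<Longrightarrow> integrable (lebesgue_on \<Omega>) (\<lambda>x. (u x)\<^sup>2)"
  by (simp add: L2_def)

lemma L2_prod_int:
  assumes "u \<in> L2 \<Omega>" "v \<in> L2 \<Omega>"
  shows "integrable (lebesgue_on \<Omega>) (\<lambda>x. u x * v x)"
proof (rule Bochner_Integration.integrable_bound[where f="\<lambda>x. (u x)\<^sup>2 + (v x)\<^sup>2"])
  show "integrable (lebesgue_on \<Omega>) (\<lambda>x. (u x)\<^sup>2 + (v x)\<^sup>2)"
    using assms by (intro Bochner_Integration.integrable_add L2_sq)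
  show "(\<lambda>x. u x * v x) \<in> borel_measurable (lebesgue_on \<Omega>)"
    using assms L2_meas by measurable
  show "AE x in lebesgue_on \<Omega>. norm (u x * v x) \<le> norm ((u x)\<^sup>2 + (v x)\<^sup>2)"
    using abs_mult_le_sq by (auto intro!: AE_I2)
qed

lemma L2_add: assumes "u \<in> L2 \<Omega>" "v \<in> L2 \<Omega>" shows "(\<lambda>x. u x + v x) \<in> L2 \<Omega>"
proof -
  have "integrable (lebesgue_on \<Omega>) (\<lambda>x. (u x)\<^sup>2 + 2 * (u x * v x) + (v x)\<^sup>2)"
    using assms by (intro Bochner_Integration.integrable_add integrable_mult_right L2_sq L2_prod_int)
  moreover have "(\<lambda>x. (u x + v x)\<^sup>2) = (\<lambda>x. (u x)\<^sup>2 + 2 * (u x * v x) + (v x)\<^sup>2)"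
    by (simp add: power2_eq_square algebra_simps)
  ultimately show ?thesis using assms L2_meas unfolding L2_def by auto
qed

lemma L2_scale: assumes "u \<in> L2 \<Omega>" shows "(\<lambda>x. c * u x) \<in> L2 \<Omega>"
proof -
  have "integrable (lebesgue_on \<Omega>) (\<lambda>x. c\<^sup>2 * (u x)\<^sup>2)"
    using assms by (intro integrable_mult_right L2_sq)
  moreover have "(\<lambda>x. (c * u x)\<^sup>2) = (\<lambda>x. c\<^sup>2 * (u x)\<^sup>2)"
    by (simp add: power_mult_distrib)
  ultimately show ?thesis using assms L2_meas unfolding L2_def by auto
qed

lemma L2_diff: assumes "u \<in> L2 \<Omega>" "v \<in> L2 \<Omega>" shows "(\<lambda>x. u x - v x) \<in> L2 \<Omega>"
proof -
  have "(\<lambda>x. u x + (-1) * v x) \<in> L2 \<Omega>" using assms by (intro L2_add L2_scale)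
  thus ?thesis by simp
qed

lemma L2_zero: "(\<lambda>x. 0) \<in> L2 \<Omega>"
  unfolding L2_def by simp

lemma L2_norm_sq: "u \<in> L2 \<Omega> \<Longrightarrow> (L2_norm \<Omega> u)\<^sup>2 = integral\<^sup>L (lebesgue_on \<Omega>) (\<lambda>x. (u x)\<^sup>2)"
  unfolding L2_norm_def by (simp add: integral_nonneg_AE)

lemma L2_norm_nonneg: "L2_norm \<Omega> u \<ge> 0"
  unfolding L2_norm_def by (simp add: integral_nonneg_AE)

lemma L2_norm_scale: "L2_norm \<Omega> (\<lambda>x. c * u x) = \<bar>c\<bar> * L2_norm \<Omega> u"
  unfolding L2_norm_def by (simp add: power_mult_distrib real_sqrt_mult)

lemma L2_inner_scale: "L2_inner \<Omega> g (\<lambda>x. c * u x) = c * L2_inner \<Omega> g u"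
proof -
  have "(\<lambda>x. g x * (c * u x)) = (\<lambda>x. c * (g x * u x))" by (simp add: algebra_simps)
  thus ?thesis unfolding L2_inner_def by simp
qed


lemma real_cs:
  fixes A B x :: real
  assumes "0\<le>A" "0\<le>B" "\<And>c. c>0 \<Longrightarrow> 2*c*x \<le> c\<^sup>2*A + B"
  shows "x \<le> sqrt A * sqrt B"
proof (cases "x \<le> 0")
  case True
  have "0 \<le> sqrt A * sqrt B" using assms by simp
  thus ?thesis using True by linarith
next
  case False
  hence x: "x > 0" by simp
  show ?thesis
  proof (cases "A = 0")
    case True
    have "2*((B+1)/(2*x))*x \<le> ((B+1)/(2*x))\<^sup>2*A + B"
      using assms(3)[of "(B+1)/(2*x)"] x assms(2) by simp
    thus ?thesis using True x by simp
  next
    case A: False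
    show ?thesis
    proof (cases "B = 0")
      case True
      define y where "y = x/(A+1)"
      have y: "y > 0" unfolding y_def using x assms(1) by simp
      have xy: "x = (A+1) * y" unfolding y_def using assms(1) by simp
      have h: "2*y*x \<le> y\<^sup>2*A + B" using assms(3)[OF y] .
      hence "y\<^sup>2 * (2*(A+1)) \<le> y\<^sup>2 * A" using True xy by (simp add: power2_eq_square algebra_simps)
      hence "2*(A+1) \<le> A" using y by simp
      thus ?thesis using assms(1) by simp
    next
      case B: False
      have sA: "sqrt A > 0" and sB: "sqrt B > 0" using A B assms by auto
      define c where "c = sqrt B / sqrt A"
      have c: "c > 0" using sA sB by (simp add: c_def)
      have "c\<^sup>2 * A = B" using sA sB assms(1,2) by (simp add: c_def power_divide)
      hence "2*c*x \<le> 2*B" using assms(3)[OF c] by simp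
      hence "x \<le> B / c" using c by (simp add: field_simps)
      also have "B / c = sqrt A * sqrt B" using sA sB assms(2) unfolding c_def
        by (simp add: field_simps)
      finally show ?thesis .
    qed
  qed
qed

lemma L2_CS:
  assumes "u \<in> L2 \<Omega>" "v \<in> L2 \<Omega>"
  shows "L2_inner \<Omega> u v \<le> L2_norm \<Omega> u * L2_norm \<Omega> v"
proof -
  let ?M = "lebesgue_on \<Omega>"
  define A where "A = integral\<^sup>L ?M (\<lambda>x. (u x)\<^sup>2)"
  define B where "B = integral\<^sup>L ?M (\<lambda>x. (v x)\<^sup>2)"
  have "L2_inner \<Omega> u v \<le> sqrt A * sqrt B"
  proof (rule real_cs)
    show "0 \<le> A" "0 \<le> B" unfolding A_def B_def by (simp_all add: integral_nonneg_AE)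
    fix c :: real assume "c > 0"
    have "integral\<^sup>L ?M (\<lambda>x. 2*c*(u x * v x)) \<le> integral\<^sup>L ?M (\<lambda>x. c\<^sup>2*(u x)\<^sup>2 + (v x)\<^sup>2)"
    proof (rule integral_mono)
      show "integrable ?M (\<lambda>x. 2*c*(u x * v x))" using assms by (intro integrable_mult_right L2_prod_int)
      show "integrable ?M (\<lambda>x. c\<^sup>2*(u x)\<^sup>2 + (v x)\<^sup>2)" using assms
        by (intro Bochner_Integration.integrable_add integrable_mult_right L2_sq)
      fix x
      have "0 \<le> (c * u x - v x)\<^sup>2" by simp
      thus "2*c*(u x * v x) \<le> c\<^sup>2*(u x)\<^sup>2 + (v x)\<^sup>2" by (simp add: power2_eq_square algebra_simps)
    qed
    also have "\<dots> = c\<^sup>2 * A + B" unfolding A_def B_def using assms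
      by (subst Bochner_Integration.integral_add) (auto intro!: integrable_mult_right L2_sq)
    finally show "2*c*L2_inner \<Omega> u v \<le> c\<^sup>2 * A + B" unfolding L2_inner_def by simp
  qed
  thus ?thesis unfolding L2_norm_def A_def B_def .
qed

lemma L2_inner_diff_left:
  assumes "a \<in> L2 \<Omega>" "b \<in> L2 \<Omega>" "d \<in> L2 \<Omega>"
  shows "L2_inner \<Omega> (\<lambda>x. a x - b x) d = L2_inner \<Omega> a d - L2_inner \<Omega> b d"
proof -
  have "(\<lambda>x. (a x - b x) * d x) = (\<lambda>x. a x * d x - b x * d x)" by (simp add: algebra_simps)
  thus ?thesis unfolding L2_inner_def using assms
    by (simp add: Bochner_Integration.integral_diff L2_prod_int)
qed

lemma L2_inner_diff_right:
  assumes "a \<in> L2 \<Omega>" "b \<in> L2 \<Omega>" "d \<in> L2 \<Omega>"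
  shows "L2_inner \<Omega> d (\<lambda>x. a x - b x) = L2_inner \<Omega> d a - L2_inner \<Omega> d b"
proof -
  have "(\<lambda>x. d x * (a x - b x)) = (\<lambda>x. d x * a x - d x * b x)" by (simp add: algebra_simps)
  thus ?thesis unfolding L2_inner_def using assms
    by (simp add: Bochner_Integration.integral_diff L2_prod_int)
qed


lemma line_deriv:
  assumes A: "assumptionA \<Omega> f G Lf" and u: "u \<in> L2 \<Omega>" and d: "d \<in> L2 \<Omega>"
  shows "((\<lambda>t. f (\<lambda>x. u x + t * d x)) has_real_derivative
           L2_inner \<Omega> (G (\<lambda>x. u x + t * d x)) d) (at t)"
proof -
  define w where "w = (\<lambda>x. u x + t * d x)"
  have w: "w \<in> L2 \<Omega>" unfolding w_def using u d by (intro L2_add L2_scale)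
  define D where "D = L2_inner \<Omega> (G w) d"
  define N where "N = L2_norm \<Omega> d"
  have N: "N \<ge> 0" unfolding N_def by (rule L2_norm_nonneg)
  have fr: "\<forall>\<epsilon>>0. \<exists>\<delta>>0. \<forall>h\<in>L2 \<Omega>. L2_norm \<Omega> h < \<delta> \<longrightarrow>
           \<bar>f (\<lambda>x. w x + h x) - f w - L2_inner \<Omega> (G w) h\<bar> \<le> \<epsilon> * L2_norm \<Omega> h"
    using A w unfolding assumptionA_def by blast
  have "(\<lambda>h. (f (\<lambda>x. u x + (t + h) * d x) - f (\<lambda>x. u x + t * d x)) / h) \<midarrow>0\<rightarrow> D"
    unfolding LIM_eq
  proof (intro allI impI)
    fix r :: real assume r: "r > 0"
    define \<epsilon> where "\<epsilon> = r / (2 * (N + 1))"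
    have eps: "\<epsilon> > 0" unfolding \<epsilon>_def using r N by simp
    obtain \<delta> where dl: "\<delta> > 0" and H: "\<And>h. h \<in> L2 \<Omega> \<Longrightarrow> L2_norm \<Omega> h < \<delta> \<Longrightarrow>
           \<bar>f (\<lambda>x. w x + h x) - f w - L2_inner \<Omega> (G w) h\<bar> \<le> \<epsilon> * L2_norm \<Omega> h"
      using fr eps by blast
    show "\<exists>s>0. \<forall>h. h \<noteq> 0 \<and> norm (h - 0) < s \<longrightarrow>
      norm ((f (\<lambda>x. u x + (t + h) * d x) - f (\<lambda>x. u x + t * d x)) / h - D) < r"
    proof (intro exI[of _ "\<delta> / (N + 1)"] conjI allI impI)
      show "\<delta> / (N + 1) > 0" using dl N by simp
      fix h :: real assume hh: "h \<noteq> 0 \<and> norm (h - 0) < \<delta> / (N + 1)"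
      hence h0: "h \<noteq> 0" and hl: "\<bar>h\<bar> * (N + 1) < \<delta>" using N by (auto simp: field_simps)
      have hd: "(\<lambda>x. h * d x) \<in> L2 \<Omega>" using d by (rule L2_scale)
      have nh: "L2_norm \<Omega> (\<lambda>x. h * d x) = \<bar>h\<bar> * N" unfolding N_def by (rule L2_norm_scale)
      have "\<bar>h\<bar> * N \<le> \<bar>h\<bar> * (N + 1)" by (simp add: mult_left_mono)
      hence "L2_norm \<Omega> (\<lambda>x. h * d x) < \<delta>" using hl nh by linarith
      from H[OF hd this] have
        "\<bar>f (\<lambda>x. w x + h * d x) - f w - h * D\<bar> \<le> \<epsilon> * (\<bar>h\<bar> * N)"
        using nh by (simp add: L2_inner_scale D_def)
      moreover have "(\<lambda>x. w x + h * d x) = (\<lambda>x. u x + (t + h) * d x)"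
        unfolding w_def by (simp add: algebra_simps)
      ultimately have E: "\<bar>f (\<lambda>x. u x + (t + h) * d x) - f w - h * D\<bar> \<le> \<epsilon> * (\<bar>h\<bar> * N)" by simp
      have "(f (\<lambda>x. u x + (t + h) * d x) - f w) / h - D = (f (\<lambda>x. u x + (t + h) * d x) - f w - h * D) / h"
        using h0 by (simp add: field_simps)
      hence "\<bar>(f (\<lambda>x. u x + (t + h) * d x) - f w) / h - D\<bar> = \<bar>f (\<lambda>x. u x + (t + h) * d x) - f w - h * D\<bar> / \<bar>h\<bar>"
        by (simp add: abs_divide)
      also have "\<dots> \<le> \<epsilon> * (\<bar>h\<bar> * N) / \<bar>h\<bar>" by (rule divide_right_mono[OF E]) simp
      also have "\<dots> = \<epsilon> * N" using h0 by simp
      also have "\<dots> < r"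
      proof -
        have pos: "0 < 2*(N+1)" using N by simp
        have "r*N < r*(2*(N+1))" using r N by (intro mult_strict_left_mono) auto
        hence "(r*N)/(2*(N+1)) < r" using pos by (simp add: pos_divide_less_eq mult.commute)
        thus ?thesis unfolding \<epsilon>_def by simp
      qed
      finally show "norm ((f (\<lambda>x. u x + (t + h) * d x) - f (\<lambda>x. u x + t * d x)) / h - D) < r"
        unfolding w_def by simp
    qed
  qed
  thus ?thesis unfolding DERIV_def D_def w_def by simp
qed

lemma descent:
  assumes A: "assumptionA \<Omega> f G Lf" and u: "u \<in> L2 \<Omega>" and d: "d \<in> L2 \<Omega>"
  shows "f (\<lambda>x. u x + d x) \<le> f u + L2_inner \<Omega> (G u) d + Lf / 2 * (L2_norm \<Omega> d)\<^sup>2"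
proof -
  define D0 where "D0 = L2_inner \<Omega> (G u) d"
  define N where "N = L2_norm \<Omega> d"
  have N: "N \<ge> 0" unfolding N_def by (rule L2_norm_nonneg)
  have Lf: "Lf \<ge> 0" using A unfolding assumptionA_def by blast
  have GL2: "\<And>v. v \<in> L2 \<Omega> \<Longrightarrow> G v \<in> L2 \<Omega>" using A unfolding assumptionA_def by blast
  have Lip: "\<And>v w. v \<in> L2 \<Omega> \<Longrightarrow> w \<in> L2 \<Omega> \<Longrightarrow>
        L2_norm \<Omega> (\<lambda>x. G v x - G w x) \<le> Lf * L2_norm \<Omega> (\<lambda>x. v x - w x)"
    using A unfolding assumptionA_def by blast
  define \<psi> where "\<psi> = (\<lambda>t. f (\<lambda>x. u x + t * d x) - t * D0 - Lf / 2 * t\<^sup>2 * N\<^sup>2)"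
  have "\<psi> 1 \<le> \<psi> 0"
  proof (rule DERIV_nonpos_imp_nonincreasing[of 0 1 \<psi>])
    fix t :: real assume t: "0 \<le> t" "t \<le> 1"
    define w where "w = (\<lambda>x. u x + t * d x)"
    have w: "w \<in> L2 \<Omega>" unfolding w_def using u d by (intro L2_add L2_scale)
    have der: "(\<psi> has_real_derivative
        (L2_inner \<Omega> (G w) d - D0 - Lf / 2 * (2 * t) * N\<^sup>2)) (at t)"
      unfolding \<psi>_def w_def
      by (rule derivative_eq_intros line_deriv[OF A u d] refl | simp)+
    have "L2_inner \<Omega> (G w) d - D0 = L2_inner \<Omega> (\<lambda>x. G w x - G u x) d"
      unfolding D0_def using GL2[OF w] GL2[OF u] d by (simp add: L2_inner_diff_left)
    also have "\<dots> \<le> L2_norm \<Omega> (\<lambda>x. G w x - G u x) * N"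
      unfolding N_def using GL2[OF w] GL2[OF u] d by (intro L2_CS L2_diff)
    also have "\<dots> \<le> Lf * L2_norm \<Omega> (\<lambda>x. w x - u x) * N"
      using Lip[OF w u] N by (simp add: mult_right_mono)
    also have "(\<lambda>x. w x - u x) = (\<lambda>x. t * d x)" unfolding w_def by simp
    also have "Lf * L2_norm \<Omega> (\<lambda>x. t * d x) * N = Lf * t * N\<^sup>2"
      unfolding N_def L2_norm_scale using t by (simp add: power2_eq_square)
    finally have "L2_inner \<Omega> (G w) d - D0 - Lf / 2 * (2 * t) * N\<^sup>2 \<le> 0" by simp
    with der show "\<exists>y. (\<psi> has_real_derivative y) (at t) \<and> y \<le> 0" by blast
  qed simp
  moreover have "\<psi> 0 = f u" unfolding \<psi>_def by simp
  moreover have "\<psi> 1 = f (\<lambda>x. u x + d x) - D0 - Lf / 2 * N\<^sup>2" unfolding \<psi>_def by simp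
  ultimately show ?thesis unfolding D0_def N_def by simp
qed


lemma fin_meas:
  assumes "\<Omega> \<in> sets lebesgue" "emeasure lebesgue \<Omega> < \<infinity>"
  shows "finite_measure (lebesgue_on (\<Omega>::(real^'n) set))"
  using assms by (intro finite_measureI) (simp add: emeasure_restrict_space space_restrict_space)

lemma L2_L1:
  assumes fm: "finite_measure (lebesgue_on \<Omega>)" and u: "u \<in> L2 \<Omega>"
  shows "integrable (lebesgue_on \<Omega>) (\<lambda>x. \<bar>u x\<bar>)"
proof (rule Bochner_Integration.integrable_bound[where f="\<lambda>x. 1 + (u x)\<^sup>2"])
  show "integrable (lebesgue_on \<Omega>) (\<lambda>x. 1 + (u x)\<^sup>2)"
    using u fm by (intro Bochner_Integration.integrable_add L2_sq finite_measure.integrable_const)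
  show "(\<lambda>x. \<bar>u x\<bar>) \<in> borel_measurable (lebesgue_on \<Omega>)" using u L2_meas by measurable
  show "AE x in lebesgue_on \<Omega>. norm \<bar>u x\<bar> \<le> norm (1 + (u x)\<^sup>2)"
  proof (intro AE_I2)
    fix x
    have "0 \<le> (\<bar>u x\<bar> - 1)\<^sup>2" by simp
    hence "2 * \<bar>u x\<bar> \<le> 1 + (u x)\<^sup>2" by (simp add: power2_diff)
    hence "\<bar>u x\<bar> \<le> 1 + (u x)\<^sup>2" by simp
    thus "norm \<bar>u x\<bar> \<le> norm (1 + (u x)\<^sup>2)" by simp
  qed
qed

lemma sgn_L2:
  assumes fm: "finite_measure (lebesgue_on \<Omega>)" and a: "a \<in> borel_measurable (lebesgue_on \<Omega>)"
  shows "(\<lambda>x. sgn (a x)) \<in> L2 \<Omega>"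
proof -
  have m: "(\<lambda>x. sgn (a x)) \<in> borel_measurable (lebesgue_on \<Omega>)" using a by measurable
  have "integrable (lebesgue_on \<Omega>) (\<lambda>x. (sgn (a x))\<^sup>2)"
    using m by (intro finite_measure.integrable_const_bound[OF fm, where B=1]) (auto simp: sgn_if)
  thus ?thesis using m unfolding L2_def by auto
qed

lemma int_ae:
  assumes u: "u \<in> L2 \<Omega>" and fin: "int_delta_Z \<Omega> u \<noteq> \<infinity>"
  shows "AE x in lebesgue_on \<Omega>. u x \<in> \<int>"
proof -
  have "\<int> \<in> sets (borel :: real measure)" by (simp add: borel_closed)
  hence "(\<lambda>x. if u x \<in> \<int> then 0 else \<infinity> :: ennreal) \<in> borel_measurable (lebesgue_on \<Omega>)"
    using u L2_meas by measurable
  from nn_integral_noteq_infinite[OF this] fin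
  have "AE x in lebesgue_on \<Omega>. (if u x \<in> \<int> then 0 else \<infinity> :: ennreal) \<noteq> \<infinity>"
    unfolding int_delta_Z_def by simp
  thus ?thesis by (rule AE_mp) (auto intro!: AE_I2 split: if_splits)
qed

lemma int_zero:
  assumes "AE x in lebesgue_on \<Omega>. u x \<in> \<int>"
  shows "int_delta_Z \<Omega> u = 0"
proof -
  have "int_delta_Z \<Omega> u = (\<integral>\<^sup>+ x. 0 \<partial>(lebesgue_on \<Omega>))"
    unfolding int_delta_Z_def by (rule nn_integral_cong_AE) (use assms in \<open>auto elim: AE_mp\<close>)
  thus ?thesis by simp
qed

lemma int_abs_le_sq: "(z::real) \<in> \<int> \<Longrightarrow> \<bar>z\<bar> \<le> z\<^sup>2"
proof (elim Ints_cases)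
  fix n :: int assume "z = of_int n"
  have "\<bar>n\<bar> \<le> n\<^sup>2"
  proof (cases "n = 0")
    case False
    hence "\<bar>n\<bar> * 1 \<le> \<bar>n\<bar> * \<bar>n\<bar>" by (intro mult_left_mono) auto
    thus ?thesis by (simp add: power2_eq_square)
  qed simp
  thus "\<bar>z\<bar> \<le> z\<^sup>2" using \<open>z = of_int n\<close> by (metis of_int_abs of_int_le_iff of_int_power)
qed

lemma mult_sgn_le: "(a::real) * sgn b \<le> \<bar>a\<bar>"
  by (cases "b > 0"; cases "b < 0") (auto simp: sgn_if)



theorem theorem5p4:
  fixes \<Omega> :: "(real^'n) set"
    and f :: "(real^'n \<Rightarrow> real) \<Rightarrow> real"
    and G :: "(real^'n \<Rightarrow> real) \<Rightarrow> (real^'n \<Rightarrow> real)"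
    and Lf L :: real
    and u :: "nat \<Rightarrow> real^'n \<Rightarrow> real"
    and ustar :: "real^'n \<Rightarrow> real"
  assumes "\<Omega> \<in> sets lebesgue"
    and "emeasure lebesgue \<Omega> < \<infinity>"
    and "assumptionA \<Omega> f G Lf"
    and "L > Lf"
    and "u 0 \<in> L2 \<Omega>"
    and "\<And>k. u (Suc k) \<in> L2 \<Omega> \<and>
              (\<forall>v\<in>L2 \<Omega>. model_obj \<Omega> f G L (u k) (u (Suc k)) \<le> model_obj \<Omega> f G L (u k) v)"
    and "ustar \<in> L2 \<Omega>"
    and "\<exists>r. strict_mono r \<and> L2_weak_conv \<Omega> (u \<circ> r) ustar"
  shows "(\<lambda>k. integral\<^sup>L (lebesgue_on \<Omega>) (\<lambda>x. \<bar>u k x - ustar x\<bar>)) \<longlonglongrightarrow> 0"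
proof -
  let ?M = "lebesgue_on \<Omega>"
  note A = assms(3)
  have fm: "finite_measure ?M" using assms(1,2) by (rule fin_meas)
  obtain r where r: "strict_mono r" and wc: "L2_weak_conv \<Omega> (u \<circ> r) ustar" using assms(8) by blast
  have uL2: "u k \<in> L2 \<Omega>" for k using assms(5,6) by (cases k) auto
  have minim: "model_obj \<Omega> f G L (u k) (u (Suc k)) \<le> model_obj \<Omega> f G L (u k) v" if "v \<in> L2 \<Omega>" for k v
    using assms(6) that by blast
  have dz0: "int_delta_Z \<Omega> (\<lambda>x. 0) = 0" by (rule int_zero) simp
  have intg: "AE x in ?M. u k x \<in> \<int>" if k1: "k \<ge> 1" for k
  proof -
    obtain j where k: "k = Suc j" using k1 by (cases k) auto
    have "model_obj \<Omega> f G L (u j) (u (Suc j)) \<le> model_obj \<Omega> f G L (u j) (\<lambda>x. 0)"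
      by (rule minim[OF L2_zero])
    hence "int_delta_Z \<Omega> (u (Suc j)) \<noteq> \<infinity>"
      unfolding model_obj_def dz0 by (auto simp: zero_ennreal.rep_eq simp del: ereal_plus_eq_PInfty)
    thus ?thesis using int_ae[OF uL2] k by simp
  qed
  define d where "d k = (\<lambda>x. u (Suc k) x - u k x)" for k
  have dL2: "d k \<in> L2 \<Omega>" for k unfolding d_def using uL2 by (intro L2_diff)
  define N where "N k = (L2_norm \<Omega> (d k))\<^sup>2" for k
  have N0: "N k \<ge> 0" for k unfolding N_def by simp
  have dec: "f (u (Suc k)) \<le> f (u k) - (L - Lf) / 2 * N k" if "k \<ge> 1" for k
  proof -
    have z1: "int_delta_Z \<Omega> (u k) = 0" using intg[OF that] by (rule int_zero)
    have z2: "int_delta_Z \<Omega> (u (Suc k)) = 0" using intg[of "Suc k"] by (intro int_zero) simp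
    have "model_obj \<Omega> f G L (u k) (u (Suc k)) \<le> model_obj \<Omega> f G L (u k) (u k)"
      by (rule minim[OF uL2])
    moreover have "model_obj \<Omega> f G L (u k) (u k) = ereal (f (u k))"
      unfolding model_obj_def z1 by (simp add: L2_inner_def L2_norm_def zero_ennreal.rep_eq)
    moreover have "model_obj \<Omega> f G L (u k) (u (Suc k)) =
        ereal (f (u k) + L2_inner \<Omega> (G (u k)) (d k) + L / 2 * N k)"
      unfolding model_obj_def z2 d_def N_def by (simp add: zero_ennreal.rep_eq)
    ultimately have m: "L2_inner \<Omega> (G (u k)) (d k) + L / 2 * N k \<le> 0" by simp
    have "f (\<lambda>x. u k x + d k x) \<le> f (u k) + L2_inner \<Omega> (G (u k)) (d k) + Lf / 2 * N k"
      unfolding N_def by (rule descent[OF A uL2 dL2])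
    moreover have "(\<lambda>x. u k x + d k x) = u (Suc k)" unfolding d_def by auto
    ultimately have e: "f (u (Suc k)) \<le> f (u k) + L2_inner \<Omega> (G (u k)) (d k) + Lf / 2 * N k" by simp
    have "(L - Lf) / 2 * N k = L / 2 * N k - Lf / 2 * N k" by (simp add: left_diff_distrib diff_divide_distrib)
    thus ?thesis using e m by linarith
  qed
  obtain c where c: "\<And>v. v \<in> L2 \<Omega> \<Longrightarrow> c \<le> f v" using A unfolding assumptionA_def by blast
  define a where "a j = N (Suc j)" for j
  have psum: "(L - Lf) / 2 * (\<Sum>j\<le>n. a j) \<le> f (u 1) - f (u (Suc (Suc n)))" for n
  proof (induction n)
    case 0 thus ?case using dec[of 1] by (simp add: a_def)
  next
    case (Suc n)
    have "f (u (Suc (Suc (Suc n)))) \<le> f (u (Suc (Suc n))) - (L - Lf) / 2 * a (Suc n)"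
      using dec[of "Suc (Suc n)"] by (simp add: a_def)
    thus ?case using Suc.IH by (simp add: algebra_simps)
  qed
  have LL: "(L - Lf) / 2 > 0" using assms(4) by simp
  have "summable a"
  proof (rule bounded_imp_summable)
    show "0 \<le> a n" for n unfolding a_def by (rule N0)
    fix n
    have "(L - Lf) / 2 * (\<Sum>j\<le>n. a j) \<le> f (u 1) - c" using psum[of n] c[OF uL2[of "Suc (Suc n)"]] by linarith
    thus "(\<Sum>j\<le>n. a j) \<le> (f (u 1) - c) / ((L - Lf) / 2)"
      using LL by (simp add: pos_le_divide_eq mult.commute)
  qed
  define e where "e j = integral\<^sup>L ?M (\<lambda>x. \<bar>u (Suc j) x - u j x\<bar>)" for j
  have e0: "e j \<ge> 0" for j unfolding e_def by (simp add: integral_nonneg_AE)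
  have "e (Suc j) \<le> a j" for j
  proof -
    have "e (Suc j) \<le> integral\<^sup>L ?M (\<lambda>x. (d (Suc j) x)\<^sup>2)"
      unfolding e_def
    proof (rule integral_mono_AE)
      show "integrable ?M (\<lambda>x. \<bar>u (Suc (Suc j)) x - u (Suc j) x\<bar>)"
        using L2_L1[OF fm dL2[of "Suc j"]] by (simp add: d_def)
      show "integrable ?M (\<lambda>x. (d (Suc j) x)\<^sup>2)" using dL2 by (rule L2_sq)
      show "AE x in ?M. \<bar>u (Suc (Suc j)) x - u (Suc j) x\<bar> \<le> (d (Suc j) x)\<^sup>2"
      proof -
        have i1: "AE x in ?M. u (Suc j) x \<in> \<int>" by (rule intg) simp
        have i2: "AE x in ?M. u (Suc (Suc j)) x \<in> \<int>" by (rule intg) simp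
        from i1 i2 show ?thesis
          by eventually_elim (simp add: d_def int_abs_le_sq Ints_diff)
      qed
    qed
    also have "\<dots> = a j" unfolding a_def N_def using dL2 by (simp add: L2_norm_sq)
    finally show ?thesis .
  qed
  hence "summable (\<lambda>j. e (Suc j))"
    by (intro summable_comparison_test[OF _ \<open>summable a\<close>]) (auto simp: e0)
  hence se: "summable e" by (simp add: summable_Suc_iff)
  have L1d: "integrable ?M (\<lambda>x. \<bar>u i x - u j x\<bar>)" for i j
    using L2_L1[OF fm L2_diff[OF uL2 uL2]] .
  have tri: "integral\<^sup>L ?M (\<lambda>x. \<bar>u m x - u k x\<bar>) \<le> sum e {k..<m}" if "k \<le> m" for k m
    using that
  proof (induction m rule: dec_induct)
    case base thus ?case by simp
  next
    case (step m)
    have "integral\<^sup>L ?M (\<lambda>x. \<bar>u (Suc m) x - u k x\<bar>) \<le>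
          integral\<^sup>L ?M (\<lambda>x. \<bar>u (Suc m) x - u m x\<bar> + \<bar>u m x - u k x\<bar>)"
      by (rule integral_mono) (auto intro!: Bochner_Integration.integrable_add L1d)
    also have "\<dots> = e m + integral\<^sup>L ?M (\<lambda>x. \<bar>u m x - u k x\<bar>)"
      unfolding e_def by (rule Bochner_Integration.integral_add) (rule L1d)+
    finally show ?case using step.IH step.hyps by simp
  qed
  define T where "T k = suminf e - sum e {..<k}" for k
  have sT: "sum e {k..<m} \<le> T k" if "k \<le> m" for k m
  proof -
    have "sum e {..<k} + sum e {k..<m} = sum e {..<m}"
      using that by (metis atLeast0LessThan sum.atLeastLessThan_concat zero_le)
    moreover have "sum e {..<m} \<le> suminf e" using se e0 by (intro sum_le_suminf) auto
    ultimately show ?thesis unfolding T_def by simp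
  qed
  have T0: "T \<longlonglongrightarrow> 0"
  proof -
    have "(\<lambda>k. suminf e - sum e {..<k}) \<longlonglongrightarrow> suminf e - suminf e"
      by (intro tendsto_diff tendsto_const summable_LIMSEQ se)
    thus ?thesis unfolding T_def by simp
  qed
  have key: "integral\<^sup>L ?M (\<lambda>x. \<bar>u k x - ustar x\<bar>) \<le> T k" for k
  proof -
    define s where "s = (\<lambda>x. sgn (u k x - ustar x))"
    have sL2: "s \<in> L2 \<Omega>" unfolding s_def
      using uL2[of k] assms(7) L2_meas by (intro sgn_L2[OF fm]) measurable
    have lim: "(\<lambda>m. L2_inner \<Omega> (u (r m)) s) \<longlonglongrightarrow> L2_inner \<Omega> ustar s"
      using wc sL2 unfolding L2_weak_conv_def by auto
    have lim2: "(\<lambda>m. L2_inner \<Omega> (u k) s - L2_inner \<Omega> (u (r m)) s) \<longlonglongrightarrow>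
          L2_inner \<Omega> (u k) s - L2_inner \<Omega> ustar s"
      by (intro tendsto_diff tendsto_const lim)
    have eq: "L2_inner \<Omega> (u k) s - L2_inner \<Omega> ustar s = integral\<^sup>L ?M (\<lambda>x. \<bar>u k x - ustar x\<bar>)"
    proof -
      have "L2_inner \<Omega> (u k) s - L2_inner \<Omega> ustar s = L2_inner \<Omega> (\<lambda>x. u k x - ustar x) s"
        using uL2 assms(7) sL2 by (simp add: L2_inner_diff_left)
      also have "\<dots> = integral\<^sup>L ?M (\<lambda>x. \<bar>u k x - ustar x\<bar>)"
        unfolding L2_inner_def s_def by (simp add: abs_sgn)
      finally show ?thesis .
    qed
    have ev: "\<exists>N. \<forall>m\<ge>N. L2_inner \<Omega> (u k) s - L2_inner \<Omega> (u (r m)) s \<le> T k"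
    proof (intro exI allI impI)
      fix m assume "k \<le> m"
      hence km: "k \<le> r m" using seq_suble[OF r, of m] by linarith
      have "L2_inner \<Omega> (u k) s - L2_inner \<Omega> (u (r m)) s = L2_inner \<Omega> (\<lambda>x. u k x - u (r m) x) s"
        using uL2 sL2 by (simp add: L2_inner_diff_left)
      also have "\<dots> \<le> integral\<^sup>L ?M (\<lambda>x. \<bar>u (r m) x - u k x\<bar>)"
        unfolding L2_inner_def
      proof (rule integral_mono)
        show "integrable ?M (\<lambda>x. (u k x - u (r m) x) * s x)"
          using uL2 sL2 by (intro L2_prod_int L2_diff)
        show "integrable ?M (\<lambda>x. \<bar>u (r m) x - u k x\<bar>)" by (rule L1d)
        fix x show "(u k x - u (r m) x) * s x \<le> \<bar>u (r m) x - u k x\<bar>"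
          unfolding s_def using mult_sgn_le[of "u k x - u (r m) x"] by (simp add: abs_minus_commute)
      qed
      also have "\<dots> \<le> sum e {k..<r m}" by (rule tri[OF km])
      also have "\<dots> \<le> T k" by (rule sT[OF km])
      finally show "L2_inner \<Omega> (u k) s - L2_inner \<Omega> (u (r m)) s \<le> T k" .
    qed
    show ?thesis using LIMSEQ_le_const2[OF lim2 ev] unfolding eq .
  qed
  show ?thesis
  proof (rule Lim_null_comparison[OF _ T0])
    show "\<forall>\<^sub>F k in sequentially. norm (integral\<^sup>L ?M (\<lambda>x. \<bar>u k x - ustar x\<bar>)) \<le> T k"
      using key by (auto simp: integral_nonneg_AE)
  qed
qed


end
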